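(* Let $p\ge 1$ be an integer. Define integers $\pi_r(m)$ for $r\ge1$ and $m\ge 0$ recursively by $\pi_1(m)=0$ and, for $r\ge 2$, $$\pi_r(m)=\sum_{k=0}^{r-1}r^k\,\mathbf{d}_r\!\left(\mathbf{d}_r\!\left(0,\ \mathbf{d}_r\!\left(0,\tfrac{m}{(r-1)!}\right)+k\right),\ (r-1)r^{r-1}+\sum_{j=0}^{r-2}r^j\,\mathbf{d}_{r-1}\!\left(j,\pi_{r-1}(m)\right)\right).$$ Then for each integer $m$ with $0\le m\le p!-1$ there is a permutation $\sigma_m$ of $\{0,1,\ldots,p-1\}$ with $\pi_p(m)=\sum_{k=0}^{p-1}p^k\sigma_m(k)$ (i.e. the radix-$p$ digits $\mathbf{d}_p(k,\pi_p(m))$, $k=0,\ldots,p-1$, are a rearrangement of $0,\ldots,p-1$), and $m\mapsto\sigma_m$ is a bijection from $\{0,\ldots,p!-1\}$ onto the set of all $p!$ permutations of $\{0,\ldots,p-1\}$; thus $\pi_p(m)$ is the $m$-th permutation in an enumeration of all permutations of $p$ symbols.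
   Context: For an integer $p\ge 2$, an integer $k\ge 0$ and a real number $x\ge0$, the digit function is $\mathbf{d}_p(k,x)=\lfloor x/p^k\rfloor-p\lfloor x/p^{k+1}\rfloor$; by convention $\mathbf{d}_1(k,x)=0$ for all $k,x$. A permutation $\sigma$ of $\{0,\ldots,p-1\}$ is encoded by the integer $\sum_{k=0}^{p-1}p^k\sigma(k)$, whose $k$-th radix-$p$ digit is the image of $k$. *)

theory Defs
  imports Complex_Main "HOL-Combinatorics.Permutations"
begin

text \<open>Digit function d_p(k,x) = floor(x/p^k) - p floor(x/p^(k+1)); convention d_1 = 0
  (also used for the irrelevant case p = 0).\<close>
definition digit :: "nat \<Rightarrow> nat \<Rightarrow> real \<Rightarrow> int" where
  "digit p k x = (if p < 2 then 0
     else \<lfloor>x / real p ^ k\<rfloor> - int p * \<lfloor>x / real p ^ (k + 1)\<rfloor>)"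

text \<open>pi r m for r \<ge> 1; pi 0 is an unused dummy value. The clause for
  Suc (Suc n) is the recursion for r = n + 2, so r - 1 = Suc n.\<close>
fun perm_enum :: "nat \<Rightarrow> nat \<Rightarrow> int" where
  "perm_enum 0 m = 0"
| "perm_enum (Suc 0) m = 0"
| "perm_enum (Suc (Suc n)) m =
     (\<Sum>k<Suc (Suc n). int (Suc (Suc n)) ^ k *
        digit (Suc (Suc n))
          (nat (digit (Suc (Suc n)) 0
                  (of_int (digit (Suc (Suc n)) 0 (real m / fact (Suc n)) + int k))))
          (of_int (int (Suc n) * int (Suc (Suc n)) ^ Suc n
                   + (\<Sum>j<Suc n. int (Suc (Suc n)) ^ j
                        * digit (Suc n) j (of_int (perm_enum (Suc n) m))))))"

end

theory Submission
  imports Defs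
begin

lemma digits_nat:
  "2 \<le> (p::nat) \<Longrightarrow> (\<forall>k<N. a k < p) \<Longrightarrow> j < N \<Longrightarrow> (\<Sum>k<N. p^k * a k) div p^j mod p = a j"
proof (induction j arbitrary: N a)
  case 0
  then obtain N' where N: "N = Suc N'" by (cases N) auto
  have S: "(\<Sum>k<N. p^k * a k) = a 0 + p * (\<Sum>k<N'. p^k * a (Suc k))"
    unfolding N sum.lessThan_Suc_shift by (simp add: sum_distrib_left mult_ac)
  have a0: "a 0 < p" using 0 N by auto
  show ?case unfolding S using a0 by simp
next
  case (Suc j)
  then obtain N' where N: "N = Suc N'" by (cases N) auto
  have S: "(\<Sum>k<N. p^k * a k) = a 0 + p * (\<Sum>k<N'. p^k * a (Suc k))"
    unfolding N sum.lessThan_Suc_shift by (simp add: sum_distrib_left mult_ac)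
  have a0: "a 0 < p" using Suc N by auto
  have d: "(\<Sum>k<N. p^k * a k) div p = (\<Sum>k<N'. p^k * a (Suc k))"
    unfolding S using a0 by simp
  have "(\<Sum>k<N. p^k * a k) div p^Suc j = (\<Sum>k<N. p^k * a k) div p div p^j"
    by (simp add: div_mult2_eq mult.commute)
  also have "\<dots> = (\<Sum>k<N'. p^k * a (Suc k)) div p^j" using d by simp
  finally show ?case using Suc.IH[of N' "\<lambda>k. a (Suc k)"] Suc.prems N by auto
qed

lemma digit_nat_div:
  assumes "2 \<le> p"
  shows "digit p j (real a / real b) = int (a div b div p^j mod p)"
proof -
  have e1: "real a / real b / real p ^ j = real a / real (b * p^j)" by simp
  have e2: "real a / real b / real p ^ (j+1) = real a / real (b * p^j * p)" by simp
  have "digit p j (real a / real b) = int (a div (b*p^j)) - int p * int (a div (b*p^j*p))"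
    using assms unfolding digit_def e1 e2 floor_divide_of_nat_eq by simp
  also have "\<dots> = int (a div b div p^j mod p)"
    by (simp add: div_mult2_eq minus_mult_div_eq_mod[symmetric] of_nat_diff flip: of_nat_mult)
  finally show ?thesis .
qed

lemma digit_nat:
  assumes "2 \<le> p"
  shows "digit p j (of_int (int a)) = int (a div p^j mod p)"
  using digit_nat_div[OF assms, of j a 1] by simp

definition rot :: "nat \<Rightarrow> nat \<Rightarrow> nat \<Rightarrow> nat" where
  "rot r c k = (if k < r then (c + k) mod r else k)"

lemma rot_inj_aux:
  assumes r: "0 < (r::nat)" and k: "k < r"
  shows "((c + k) + (r - c mod r)) mod r = k"
proof -
  have "c mod r < r" using r by simp
  moreover have e: "c = c mod r + r * (c div r)" by simp
  ultimately have "(c + k) + (r - c mod r) = k + r * (c div r) + r"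
    by linarith
  hence "(c + k) + (r - c mod r) = k + r * (c div r + 1)" by simp
  thus ?thesis using k by (metis mod_mult_self2 mod_less)
qed

lemma rot_permutes:
  assumes r: "0 < r"
  shows "rot r c permutes {..<r}"
proof -
  have inj: "inj_on (rot r c) {..<r}"
  proof (rule inj_onI)
    fix k k' assume k: "k \<in> {..<r}" and k': "k' \<in> {..<r}" and e: "rot r c k = rot r c k'"
    hence "(c + k) mod r = (c + k') mod r" by (simp add: rot_def)
    hence "((c + k) + (r - c mod r)) mod r = ((c + k') + (r - c mod r)) mod r"
      by (rule mod_add_cong) simp
    thus "k = k'" using rot_inj_aux[OF r] k k' by simp
  qed
  have sub: "rot r c ` {..<r} \<subseteq> {..<r}" using r by (auto simp: rot_def)
  have "rot r c ` {..<r} = {..<r}" using endo_inj_surj[OF _ sub inj] by simp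
  hence "bij_betw (rot r c) {..<r} {..<r}" using inj by (simp add: bij_betw_def)
  thus ?thesis by (rule bij_imp_permutes) (simp add: rot_def)
qed

fun sig :: "nat \<Rightarrow> nat \<Rightarrow> nat \<Rightarrow> nat" where
  "sig 0 m = id"
| "sig (Suc 0) m = id"
| "sig (Suc (Suc n)) m = sig (Suc n) m \<circ> rot (Suc (Suc n)) (m div fact (Suc n))"

lemma sig_permutes: "sig r m permutes {..<r}"
proof (induction r m rule: sig.induct)
  case (3 n m)
  have a: "sig (Suc n) m permutes {..<Suc (Suc n)}"
    by (rule permutes_subset[OF 3]) auto
  show ?case unfolding sig.simps by (rule permutes_compose[OF rot_permutes a]) simp
qed (simp_all only: sig.simps permutes_id)

lemma sig_lt: "k < r \<Longrightarrow> sig r m k < r"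
  using permutes_in_image[OF sig_permutes] by simp

lemma sig_out: "r \<le> k \<Longrightarrow> sig r m k = k"
  using permutes_not_in[OF sig_permutes] by simp

lemma enum: "perm_enum (Suc n) m = (\<Sum>k<Suc n. int (Suc n) ^ k * int (sig (Suc n) m k))"
proof (induction n)
  case 0
  then show ?case by simp
next
  case (Suc n)
  define r where "r = Suc (Suc n)"
  define \<tau> where "\<tau> = sig (Suc n) m"
  define c where "c = m div fact (Suc n)"
  have r2: "2 \<le> r" by (simp add: r_def)
  have tlt: "\<And>j. j < Suc n \<Longrightarrow> \<tau> j < Suc n" unfolding \<tau>_def by (rule sig_lt)
  have tfix: "\<tau> (Suc n) = Suc n" unfolding \<tau>_def by (rule sig_out) simp
  have tlt2: "\<And>j. j < r \<Longrightarrow> \<tau> j < r" using tlt tfix by (auto simp: r_def less_Suc_eq)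
  have inner: "(\<Sum>j<Suc n. int r ^ j * digit (Suc n) j (of_int (perm_enum (Suc n) m)))
      = (\<Sum>j<Suc n. int r ^ j * int (\<tau> j))"
  proof (cases n)
    case 0
    then show ?thesis by (simp add: digit_def \<tau>_def)
  next
    case (Suc n')
    have pe: "perm_enum (Suc n) m = int (\<Sum>k<Suc n. Suc n ^ k * \<tau> k)"
      using Suc.IH unfolding \<tau>_def by simp
    have "digit (Suc n) j (of_int (perm_enum (Suc n) m)) = int (\<tau> j)" if "j < Suc n" for j
    proof -
      have "digit (Suc n) j (of_int (perm_enum (Suc n) m))
         = int ((\<Sum>k<Suc n. Suc n ^ k * \<tau> k) div Suc n ^ j mod Suc n)"
        unfolding pe by (rule digit_nat) (simp add: Suc)
      also have "\<dots> = int (\<tau> j)"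
        by (subst digits_nat) (use tlt that Suc in auto)
      finally show ?thesis .
    qed
    thus ?thesis by simp
  qed
  have X: "int (Suc n) * int r ^ Suc n + (\<Sum>j<Suc n. int r ^ j * int (\<tau> j))
      = int (\<Sum>j<r. r ^ j * \<tau> j)"
    unfolding r_def using tfix by (simp add: algebra_simps)
  have cdig: "nat (digit r 0 (of_int (digit r 0 (real m / fact (Suc n)) + int k))) = rot r c k"
    if "k < r" for k
  proof -
    have ff: "(fact (Suc n) :: real) = real (fact (Suc n))" by (rule of_nat_fact[symmetric])
    have "digit r 0 (real m / fact (Suc n)) = int (m div fact (Suc n) div r^0 mod r)"
      unfolding ff by (rule digit_nat_div[OF r2])
    hence "digit r 0 (real m / fact (Suc n)) = int (c mod r)" by (simp add: c_def)
    hence "digit r 0 (of_int (digit r 0 (real m / fact (Suc n)) + int k)) = int ((c mod r + k) mod r)"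
      using digit_nat[OF r2, of 0 "c mod r + k"] by simp
    thus ?thesis using that by (simp add: rot_def mod_add_left_eq)
  qed
  have rlt: "\<And>k. k < r \<Longrightarrow> rot r c k < r" using r2 by (simp add: rot_def)
  have "perm_enum (Suc (Suc n)) m = (\<Sum>k<r. int r ^ k * int (\<tau> (rot r c k)))"
    apply (subst perm_enum.simps(3))
    apply (simp only: r_def[symmetric] flip: \<tau>_def)
    apply (subst inner) apply (subst X)
    apply (rule sum.cong[OF refl])
    subgoal for k
      apply (subst cdig, simp)
      apply (subst digit_nat[OF r2])
      apply (subst digits_nat[OF r2 _ rlt])
        apply (use tlt2 in auto)
      done
    done
  thus ?case by (simp add: r_def \<tau>_def c_def)
qed

lemma rot_mod: "rot r (c mod r) = rot r c"
  by (rule ext) (simp add: rot_def mod_add_left_eq)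

lemma sig_mod: "sig (Suc n) m = sig (Suc n) (m mod fact (Suc n))"
proof (induction n arbitrary: m)
  case 0
  then show ?case by simp
next
  case (Suc n)
  define f where "f = (fact (Suc n) :: nat)"
  define r where "r = Suc (Suc n)"
  define M where "M = m mod fact (Suc (Suc n))"
  have fr: "(fact (Suc (Suc n)) :: nat) = f * r" by (simp add: f_def r_def fact_Suc[of "Suc n"])
  have Mf: "M mod f = m mod f" unfolding M_def fr by (simp add: mod_mult2_eq)
  have Mdiv: "M div f = m div f mod r"
  proof -
    have "M = f * (m div f mod r) + m mod f" unfolding M_def fr by (rule mod_mult2_eq)
    moreover have "f > 0" by (simp add: f_def)
    ultimately show ?thesis by simp
  qed
  have s1: "sig (Suc n) m = sig (Suc n) M"
    using Suc.IH[of m] Suc.IH[of M] Mf by (simp add: f_def)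
  have s2: "rot r (M div f) = rot r (m div f)" using rot_mod[of r "m div f"] Mdiv by simp
  show ?case using s1 s2 by (simp add: M_def[symmetric] f_def r_def del: fact_Suc)
qed

lemma mod_two_r: "(v::nat) < 2 * r \<Longrightarrow> v mod r = (if v < r then v else v - r)"
  by (simp add: mod_if[of v r] le_mod_geq)

lemma sig_inj: "m < fact (Suc n) \<Longrightarrow> m' < fact (Suc n) \<Longrightarrow> sig (Suc n) m = sig (Suc n) m' \<Longrightarrow> m = m'"
proof (induction n arbitrary: m m')
  case 0
  then show ?case by simp
next
  case (Suc n)
  define f where "f = (fact (Suc n) :: nat)"
  define r where "r = Suc (Suc n)"
  define c where "c = m div f"
  define c' where "c' = m' div f"
  define \<tau> where "\<tau> = sig (Suc n) m"
  define \<tau>' where "\<tau>' = sig (Suc n) m'"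
  have fpos: "f > 0" by (simp add: f_def)
  have fr: "(fact (Suc (Suc n)) :: nat) = f * r" by (simp add: f_def r_def fact_Suc[of "Suc n"])
  have clt: "c < r" using Suc.prems(1) fpos unfolding c_def fr
    by (simp add: div_less_iff_less_mult mult.commute)
  have c'lt: "c' < r" using Suc.prems(2) fpos unfolding c'_def fr
    by (simp add: div_less_iff_less_mult mult.commute)
  have eq: "\<tau> \<circ> rot r c = \<tau>' \<circ> rot r c'"
    using Suc.prems(3) unfolding \<tau>_def \<tau>'_def r_def c_def c'_def f_def sig.simps(3) .
  define k0 where "k0 = Suc n - c"
  have k0lt: "k0 < r" by (simp add: k0_def r_def)
  have rk: "rot r c k0 = Suc n" using clt k0lt by (simp add: rot_def k0_def r_def)
  have tS: "\<tau> (Suc n) = Suc n" unfolding \<tau>_def by (rule sig_out) simp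
  have "\<tau>' (rot r c' k0) = Suc n" using fun_cong[OF eq, of k0] rk tS by simp
  hence rk': "rot r c' k0 = Suc n"
  proof -
    assume h: "\<tau>' (rot r c' k0) = Suc n"
    have "rot r c' k0 < r" using k0lt by (simp add: rot_def r_def)
    moreover have "x < Suc n \<Longrightarrow> \<tau>' x < Suc n" for x unfolding \<tau>'_def by (rule sig_lt)
    ultimately show ?thesis using h by (fastforce simp: r_def less_Suc_eq)
  qed
  have ceq: "c' = c"
  proof -
    have "(c' + k0) mod r = Suc n" using rk' k0lt by (simp add: rot_def)
    moreover have "c' + k0 < 2 * r" using c'lt k0lt by simp
    ultimately have "(if c' + k0 < r then c' + k0 else c' + k0 - r) = Suc n"
      using mod_two_r by simp
    thus ?thesis using clt c'lt by (simp add: k0_def r_def split: if_splits)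
  qed
  have rp: "rot r c permutes {..<r}" by (rule rot_permutes) (simp add: r_def)
  have teq: "\<tau> = \<tau>'"
  proof
    fix j
    have "\<tau> j = (\<tau> \<circ> rot r c) (inv (rot r c) j)" using permutes_inverses(1)[OF rp] by simp
    also have "\<dots> = (\<tau>' \<circ> rot r c) (inv (rot r c) j)" using eq ceq by simp
    also have "\<dots> = \<tau>' j" using permutes_inverses(1)[OF rp] by simp
    finally show "\<tau> j = \<tau>' j" .
  qed
  have "sig (Suc n) (m mod f) = sig (Suc n) (m' mod f)"
    using teq sig_mod[of n m] sig_mod[of n m'] by (simp add: \<tau>_def \<tau>'_def f_def)
  hence "m mod f = m' mod f" using Suc.IH[of "m mod f" "m' mod f"] fpos by (simp add: f_def)
  moreover have "m = f * c + m mod f" "m' = f * c' + m' mod f" by (simp_all add: c_def c'_def)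
  ultimately show ?case using ceq by metis
qed

theorem mainTheorem7:
  fixes p :: nat
  assumes "p \<ge> 1"
  shows "\<exists>\<sigma> :: nat \<Rightarrow> nat \<Rightarrow> nat.
           (\<forall>m < fact p. \<sigma> m permutes {..<p}
              \<and> perm_enum p m = (\<Sum>k<p. int p ^ k * int (\<sigma> m k)))
         \<and> bij_betw \<sigma> {..<fact p} {f. f permutes {..<p}}"
proof -
  obtain n where p: "p = Suc n" using assms by (cases p) auto
  have A: "\<forall>m < fact p. sig p m permutes {..<p}
              \<and> perm_enum p m = (\<Sum>k<p. int p ^ k * int (sig p m k))"
    unfolding p using sig_permutes enum by blast
  have inj: "inj_on (sig p) {..<fact p}"
    unfolding p by (rule inj_onI) (auto intro: sig_inj)
  have sub: "sig p ` {..<fact p} \<subseteq> {f. f permutes {..<p}}" using sig_permutes by auto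
  have fin: "finite {f. f permutes {..<p}}" by (rule finite_permutations) simp
  have "card (sig p ` {..<fact p}) = card {f. f permutes {..<p}}"
    using card_image[OF inj] card_permutations[of "{..<p}" p] by simp
  hence "sig p ` {..<fact p} = {f. f permutes {..<p}}" using card_subset_eq[OF fin sub] by simp
  hence "bij_betw (sig p) {..<fact p} {f. f permutes {..<p}}" using inj by (simp add: bij_betw_def)
  thus ?thesis using A by blast
qed

end
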